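(* Let $0<T\le 1$ and let $(f_{n,m})$, $(g_{n,m})$ ($n\in\mathbb{Z}_+$, $m\in\mathbb{Z}$) be coefficient arrays. Then $$\Big|\sum_{n,m}f_{n,m}g_{n,m}\Big|\lesssim T\,|||f|||_{0,\frac12;T}\,|||g|||_{0,\frac12;T},$$ with an absolute implicit constant.
   Context: For a coefficient array $(h_{n,m})_{n\in\mathbb{Z}_+,m\in\mathbb{Z}}$ (identified with $h(x,t)=\sum h_{n,m}e_n(x)e(mt)$, where $e_n(x)=\sin(n\pi|x|)/|x|$ on the unit ball of $\mathbb{R}^3$ and $e(y)=e^{2\pi iy}$), $|||h|||_{0,\frac12;T}\le1$ means $h_{n,m}=\frac{a_{n,m}}{(|n^2-m|+\frac1T)^{1/2}}+\frac{a_n}{|n^2-m|}\mathbf{1}_{|n^2-m|>1/T}$ for some $(a_{n,m})$, $(a_n)$ with $\sum_{n,m}|a_{n,m}|^2\le1$, $\sum_n|a_n|^2\le1$; $|||\cdot|||_{0,\frac12;T}$ is the gauge (norm) of this convex set. *)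

theory Defs
  imports "HOL-Analysis.Analysis"
begin

text \<open>Coefficient arrays are functions h :: nat => int => complex; only entries with
  n >= 1 (n in Z_+) are relevant.  The index set is Z_+ x Z.\<close>

definition idx :: "(nat \<times> int) set" where
  "idx = {1..} \<times> UNIV"

definition unit_ball_X :: "real \<Rightarrow> (nat \<Rightarrow> int \<Rightarrow> complex) \<Rightarrow> bool" where
  "unit_ball_X T h \<longleftrightarrow>
     (\<exists>a :: nat \<Rightarrow> int \<Rightarrow> complex. \<exists>b :: nat \<Rightarrow> complex.
        (\<lambda>(n,m). (norm (a n m))\<^sup>2) summable_on idx \<and>
        (\<Sum>\<^sub>\<infinity>(n,m)\<in>idx. (norm (a n m))\<^sup>2) \<le> 1 \<and>
        (\<lambda>n. (norm (b n))\<^sup>2) summable_on {1..} \<and>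
        (\<Sum>\<^sub>\<infinity>n\<in>{1..}. (norm (b n))\<^sup>2) \<le> 1 \<and>
        (\<forall>n\<ge>1. \<forall>m. h n m =
            a n m / complex_of_real (sqrt (\<bar>real_of_int (int n ^ 2 - m)\<bar> + 1 / T))
          + (if \<bar>real_of_int (int n ^ 2 - m)\<bar> > 1 / T
             then b n / complex_of_real \<bar>real_of_int (int n ^ 2 - m)\<bar> else 0)))"

text \<open>The gauge (Minkowski functional) of that convex set, valued in extended reals
  (infinite if h lies in no dilate of the unit ball).\<close>

definition normX :: "real \<Rightarrow> (nat \<Rightarrow> int \<Rightarrow> complex) \<Rightarrow> ereal" where
  "normX T h = Inf {ereal l | l. l > 0 \<and> unit_ball_X T (\<lambda>n m. h n m / complex_of_real l)}"

end

theory Submission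
  imports Defs
begin

lemma keyineq: fixes x :: real assumes "x \<ge> 1"
  shows "1/x^2 \<le> 1/(x-1/2) - 1/(x+1/2)"
proof -
  have "1/(x-1/2) - 1/(x+1/2) = 1/(x^2 - 1/4)" proof -
    have "1 \<le> x*x" using assms mult_mono[of 1 x 1 x] by simp
    then have h: "x^2 - 1/4 \<noteq> 0" "x - 1/2 \<noteq> 0" "x + 1/2 \<noteq> 0" using assms by (auto simp: power2_eq_square)
    have "1/(x-1/2) - 1/(x+1/2) = ((x+1/2) - (x-1/2)) / ((x-1/2)*(x+1/2))"
      using h by (simp add: diff_frac_eq)
    also have "(x-1/2)*(x+1/2) = x^2 - 1/4" by (simp add: algebra_simps power2_eq_square)
    finally show ?thesis by simp
  qed
  also have "1/x^2 \<le> 1/(x^2-1/4)"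
  proof -
    have "1 \<le> x^2" using assms mult_mono[of 1 x 1 x] by (simp add: power2_eq_square)
    then show ?thesis by (intro divide_left_mono) (auto intro!: mult_pos_pos)
  qed
  ultimately show ?thesis by simp
qed

lemma tele: 
  fixes a :: int assumes "a \<ge> 1"
  shows "(\<Sum>i\<le>j. 1 / (real_of_int a + real i)^2) \<le> 1/(real_of_int a - 1/2) - 1/(real_of_int a + real j + 1/2)"
proof (induction j)
  case 0
  have "1 / (real_of_int a)^2 \<le> 1/(real_of_int a - 1/2) - 1/(real_of_int a + 1/2)"
    using assms keyineq[of "real_of_int a"] by simp
  then show ?case by simp
next
  case (Suc j)
  define x where "x = real_of_int a + real j"
  have x: "x \<ge> 1" using assms by (simp add: x_def)
  have key: "1/(x+1)^2 \<le> 1/(x+1/2) - 1/(x+3/2)"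
    using x keyineq[of "x+1"] by (simp add: add.assoc add.commute)
  have "(\<Sum>i\<le>Suc j. 1 / (real_of_int a + real i)^2) = (\<Sum>i\<le>j. 1 / (real_of_int a + real i)^2) + 1/(x+1)^2"
    by (simp add: x_def add_ac)
  also have "\<dots> \<le> 1/(real_of_int a - 1/2) - 1/(x + 1/2) + 1/(x+1)^2"
    using Suc by (simp add: x_def)
  also have "\<dots> \<le> 1/(real_of_int a - 1/2) - 1/(x + 3/2)" using key by simp
  finally have "(\<Sum>i\<le>Suc j. 1 / (real_of_int a + real i)^2) \<le> 1/(real_of_int a - 1/2) - 1/(x + 3/2)" .
  moreover have "x + 3/2 = real_of_int a + real (Suc j) + 1/2" by (simp add: x_def)
  ultimately show ?case by simp
qed

lemma tail_pos:
  fixes c :: real and K :: "int set"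
  assumes c: "c \<ge> 1" and K: "finite K" "K \<subseteq> {k. real_of_int k > c}"
  shows "(\<Sum>k\<in>K. 1 / (real_of_int k)^2) \<le> 2 / c"
proof (cases "K = {}")
  case True then show ?thesis using c by simp
next
  case False
  define a where "a = Min K"
  have aK: "a \<in> K" using False K by (simp add: a_def)
  have ac: "real_of_int a > c" using aK K by auto
  have a1: "a \<ge> 1" using ac c by linarith
  have Ka: "\<And>k. k \<in> K \<Longrightarrow> a \<le> k" using K by (simp add: a_def)
  define j where "j = nat (Max K - a)"
  have sub: "K \<subseteq> (\<lambda>i. a + int i) ` {..j}"
  proof
    fix k assume k: "k \<in> K"
    have "k \<le> Max K" using K k by simp
    then have "nat (k - a) \<le> j" using Ka[OF k] by (simp add: j_def nat_le_iff) 
    moreover have "k = a + int (nat (k - a))" using Ka[OF k] by simp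
    ultimately show "k \<in> (\<lambda>i. a + int i) ` {..j}" by blast
  qed
  have "(\<Sum>k\<in>K. 1 / (real_of_int k)^2) \<le> (\<Sum>k\<in>(\<lambda>i. a + int i) ` {..j}. 1 / (real_of_int k)^2)"
    by (rule sum_mono2[OF _ sub]) auto
  also have "\<dots> = (\<Sum>i\<le>j. 1 / (real_of_int a + real i)^2)"
    by (subst sum.reindex) (auto simp: inj_on_def)
  also have "\<dots> \<le> 1/(real_of_int a - 1/2) - 1/(real_of_int a + real j + 1/2)"
    by (rule tele[OF a1])
  also have "\<dots> \<le> 1/(real_of_int a - 1/2)" using a1 by simp
  also have "\<dots> \<le> 2 / c" using ac c by (simp add: field_simps)
  finally show ?thesis .
qed

lemma tail_abs:
  fixes c :: real and K :: "int set"
  assumes c: "c \<ge> 1" and K: "finite K" "K \<subseteq> {k. \<bar>real_of_int k\<bar> > c}"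
  shows "(\<Sum>k\<in>K. 1 / (real_of_int k)^2) \<le> 4 / c"
proof -
  define Kp where "Kp = K \<inter> {k. k > 0}"
  define Kn where "Kn = K \<inter> {k. k < 0}"
  have KK: "K = Kp \<union> Kn" using K c by (auto simp: Kp_def Kn_def) 
  have d: "Kp \<inter> Kn = {}" by (auto simp: Kp_def Kn_def)
  have fin: "finite Kp" "finite Kn" using K by (auto simp: Kp_def Kn_def)
  have "(\<Sum>k\<in>K. 1 / (real_of_int k)^2) = (\<Sum>k\<in>Kp. 1 / (real_of_int k)^2) + (\<Sum>k\<in>Kn. 1 / (real_of_int k)^2)"
    unfolding KK by (rule sum.union_disjoint[OF fin d])
  also have "(\<Sum>k\<in>Kp. 1 / (real_of_int k)^2) \<le> 2/c"
    by (rule tail_pos[OF c fin(1)]) (use K in \<open>auto simp: Kp_def\<close>)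
  also have "(\<Sum>k\<in>Kn. 1 / (real_of_int k)^2) = (\<Sum>k\<in>uminus ` Kn. 1 / (real_of_int k)^2)"
    by (subst sum.reindex) (auto simp: inj_on_def)
  also have "\<dots> \<le> 2/c"
    by (rule tail_pos[OF c]) (use K fin in \<open>auto simp: Kn_def\<close>)
  finally show ?thesis by simp
qed

definition wt :: "real \<Rightarrow> nat \<Rightarrow> int \<Rightarrow> real" where
  "wt T n m = (if \<bar>real_of_int (int n ^ 2 - m)\<bar> > 1 / T then 1 / (real_of_int (int n ^ 2 - m))^2 else 0)"

lemma wt_nonneg: "wt T n m \<ge> 0" by (simp add: wt_def)

lemma inner_sum:
  assumes T: "0 < T" "T \<le> 1" and M: "finite M"
  shows "(\<Sum>m\<in>M. wt T n m) \<le> 4 * T"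
proof -
  define M' where "M' = M \<inter> {m. \<bar>real_of_int (int n ^ 2 - m)\<bar> > 1 / T}"
  have "(\<Sum>m\<in>M. wt T n m) = (\<Sum>m\<in>M'. 1 / (real_of_int (int n ^ 2 - m))^2)"
    unfolding M'_def wt_def using M by (simp add: sum.inter_restrict of_int_diff del: of_int_diff)
  also have "\<dots> = (\<Sum>k\<in>(\<lambda>m. int n ^ 2 - m) ` M'. 1 / (real_of_int k)^2)"
    by (subst sum.reindex) (auto simp: inj_on_def)
  also have "\<dots> \<le> 4 / (1/T)"
    by (rule tail_abs) (use T M in \<open>auto simp: M'_def\<close>)
  finally show ?thesis by simp
qed

lemma S2:
  fixes b :: "nat \<Rightarrow> complex"
  assumes T: "0 < T" "T \<le> 1"
    and bs: "(\<lambda>n. (norm (b n))\<^sup>2) summable_on {1..}"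
    and bi: "(\<Sum>\<^sub>\<infinity>n\<in>{1..}. (norm (b n))\<^sup>2) \<le> 1"
  shows "(\<lambda>(n,m). (norm (b n))\<^sup>2 * wt T n m) summable_on idx"
    "(\<Sum>\<^sub>\<infinity>(n,m)\<in>idx. (norm (b n))\<^sup>2 * wt T n m) \<le> 4 * T"
proof -
  have fs: "sum (\<lambda>(n,m). (norm (b n))\<^sup>2 * wt T n m) F \<le> 4 * T" if F: "finite F" "F \<subseteq> idx" for F
  proof -
    define N where "N = fst ` F"
    define M where "M = snd ` F"
    have fin: "finite N" "finite M" using F by (auto simp: N_def M_def)
    have sub: "F \<subseteq> N \<times> M" by (force simp: N_def M_def)
    have N1: "N \<subseteq> {1..}" using F by (auto simp: N_def idx_def)
    have "sum (\<lambda>(n,m). (norm (b n))\<^sup>2 * wt T n m) F \<le> sum (\<lambda>(n,m). (norm (b n))\<^sup>2 * wt T n m) (N \<times> M)"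
      by (rule sum_mono2) (use fin sub in \<open>auto intro!: mult_nonneg_nonneg wt_nonneg\<close>)
    also have "\<dots> = (\<Sum>n\<in>N. (norm (b n))\<^sup>2 * (\<Sum>m\<in>M. wt T n m))"
      by (simp add: sum.cartesian_product[symmetric] sum_distrib_left)
    also have "\<dots> \<le> (\<Sum>n\<in>N. (norm (b n))\<^sup>2 * (4 * T))"
      by (intro sum_mono mult_left_mono inner_sum) (use T fin in auto)
    also have "\<dots> = 4 * T * (\<Sum>n\<in>N. (norm (b n))\<^sup>2)"
      by (simp add: sum_distrib_left mult.commute)
    also have "(\<Sum>n\<in>N. (norm (b n))\<^sup>2) \<le> (\<Sum>\<^sub>\<infinity>n\<in>{1..}. (norm (b n))\<^sup>2)"
      by (rule finite_sum_le_infsum[OF bs fin(1) N1]) auto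
    also have "\<dots> \<le> 1" by (rule bi)
    finally show ?thesis using T by simp
  qed
  show sm: "(\<lambda>(n,m). (norm (b n))\<^sup>2 * wt T n m) summable_on idx"
    by (rule nonneg_bdd_above_summable_on)
       (auto intro!: mult_nonneg_nonneg wt_nonneg bdd_aboveI2[where M="4*T"] fs)
  show "(\<Sum>\<^sub>\<infinity>(n,m)\<in>idx. (norm (b n))\<^sup>2 * wt T n m) \<le> 4 * T"
    by (rule infsum_le_finite_sums[OF sm fs]) 
qed

lemma pw:
  fixes \<alpha> \<beta> :: complex and d T :: real
  assumes d: "d \<ge> 0" and T: "T > 0"
  shows "(norm (\<alpha> / complex_of_real (sqrt (d + 1/T)) + (if d > 1/T then \<beta> / complex_of_real d else 0)))\<^sup>2
     \<le> 2 * (T * (norm \<alpha>)\<^sup>2 + (norm \<beta>)\<^sup>2 * (if d > 1/T then 1/d^2 else 0))"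
proof -
  define u where "u = norm \<alpha> / sqrt (d + 1/T)"
  define v where "v = (if d > 1/T then norm \<beta> / d else 0)"
  have pos: "d + 1/T > 0" using d T by (simp add: add_nonneg_pos)
  have u0: "u \<ge> 0" and v0: "v \<ge> 0" using d pos by (auto simp: u_def v_def)
  have tri: "norm (\<alpha> / complex_of_real (sqrt (d + 1/T)) + (if d > 1/T then \<beta> / complex_of_real d else 0)) \<le> u + v"
    using norm_triangle_ineq[of "\<alpha> / complex_of_real (sqrt (d + 1/T))" "(if d > 1/T then \<beta> / complex_of_real d else 0)"]
    using pos d by (auto simp: u_def v_def norm_divide)
  have sq: "(norm (\<alpha> / complex_of_real (sqrt (d + 1/T)) + (if d > 1/T then \<beta> / complex_of_real d else 0)))\<^sup>2 \<le> (u+v)^2"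
    by (rule power_mono[OF tri]) simp
  also have "\<dots> \<le> 2 * (u^2 + v^2)" by (smt (verit) sum_squares_ge_zero power2_diff power2_sum zero_le_power2)
  also have "u^2 \<le> T * (norm \<alpha>)\<^sup>2"
  proof -
    have "u^2 = (norm \<alpha>)\<^sup>2 / (d + 1/T)" using pos by (simp add: u_def power_divide)
    also have "\<dots> \<le> (norm \<alpha>)\<^sup>2 / (1/T)" by (rule divide_left_mono) (use d T pos in \<open>auto intro!: mult_pos_pos\<close>)
    finally show ?thesis by (simp add: mult.commute)
  qed
  also have "v^2 = (norm \<beta>)\<^sup>2 * (if d > 1/T then 1/d^2 else 0)" by (simp add: v_def power_divide)
  finally show ?thesis by simp
qed

lemma ball_pw:
  assumes T: "T > 0" and h: "h n m = a n m / complex_of_real (sqrt (\<bar>real_of_int (int n ^ 2 - m)\<bar> + 1 / T))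
          + (if \<bar>real_of_int (int n ^ 2 - m)\<bar> > 1 / T
             then b n / complex_of_real \<bar>real_of_int (int n ^ 2 - m)\<bar> else 0)"
  shows "(norm (h n m))\<^sup>2 \<le> 2 * (T * (norm (a n m))\<^sup>2 + (norm (b n))\<^sup>2 * wt T n m)"
proof -
  have "(norm (h n m))\<^sup>2 \<le> 2 * (T * (norm (a n m))\<^sup>2 + (norm (b n))\<^sup>2 * (if \<bar>real_of_int (int n ^ 2 - m)\<bar> > 1 / T then 1/(\<bar>real_of_int (int n ^ 2 - m)\<bar>)^2 else 0))"
    unfolding h by (rule pw) (use T in auto)
  also have "(if \<bar>real_of_int (int n ^ 2 - m)\<bar> > 1 / T then 1/(\<bar>real_of_int (int n ^ 2 - m)\<bar>)^2 else 0) = wt T n m"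
    unfolding wt_def power2_abs ..
  finally show ?thesis .
qed

lemma amgm: fixes x y :: real shows "x * y \<le> (x^2 + y^2) / 2"
proof -
  have "0 \<le> (x - y)^2" by simp
  then show ?thesis by (simp add: power2_diff)
qed

lemma lin2: fixes x1 x2 y1 y2 :: real assumes "x1 \<le> 2*y1" "x2 \<le> 2*y2" shows "(x1+x2)/2 \<le> y1 + y2" using assms by simp

lemma core:
  fixes f g :: "nat \<Rightarrow> int \<Rightarrow> complex"
  assumes T: "0 < T" "T \<le> 1" and l: "l1 > 0" "l2 > 0"
    and F: "unit_ball_X T (\<lambda>n m. f n m / complex_of_real l1)"
    and G: "unit_ball_X T (\<lambda>n m. g n m / complex_of_real l2)"
  shows "norm (\<Sum>\<^sub>\<infinity>(n,m)\<in>idx. f n m * g n m) \<le> 10 * T * l1 * l2"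
proof -
  obtain a b where a1: "(\<lambda>(n,m). (norm (a n m))\<^sup>2) summable_on idx"
     and a2: "(\<Sum>\<^sub>\<infinity>(n,m)\<in>idx. (norm (a n m))\<^sup>2) \<le> 1"
     and b1: "(\<lambda>n. (norm (b n))\<^sup>2) summable_on {1..}"
     and b2: "(\<Sum>\<^sub>\<infinity>n\<in>{1..}. (norm (b n))\<^sup>2) \<le> 1"
     and fr: "\<And>n m. n \<ge> 1 \<Longrightarrow> f n m / complex_of_real l1 =
            a n m / complex_of_real (sqrt (\<bar>real_of_int (int n ^ 2 - m)\<bar> + 1 / T))
          + (if \<bar>real_of_int (int n ^ 2 - m)\<bar> > 1 / T
             then b n / complex_of_real \<bar>real_of_int (int n ^ 2 - m)\<bar> else 0)"
    using F unfolding unit_ball_X_def by blast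
  obtain a' b' where a1': "(\<lambda>(n,m). (norm (a' n m))\<^sup>2) summable_on idx"
     and a2': "(\<Sum>\<^sub>\<infinity>(n,m)\<in>idx. (norm (a' n m))\<^sup>2) \<le> 1"
     and b1': "(\<lambda>n. (norm (b' n))\<^sup>2) summable_on {1..}"
     and b2': "(\<Sum>\<^sub>\<infinity>n\<in>{1..}. (norm (b' n))\<^sup>2) \<le> 1"
     and gr: "\<And>n m. n \<ge> 1 \<Longrightarrow> g n m / complex_of_real l2 =
            a' n m / complex_of_real (sqrt (\<bar>real_of_int (int n ^ 2 - m)\<bar> + 1 / T))
          + (if \<bar>real_of_int (int n ^ 2 - m)\<bar> > 1 / T
             then b' n / complex_of_real \<bar>real_of_int (int n ^ 2 - m)\<bar> else 0)"
    using G unfolding unit_ball_X_def by blast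
  define A1 where "A1 = (\<lambda>(n,m). (norm (a n m))\<^sup>2)"
  define A2 where "A2 = (\<lambda>(n,m). (norm (a' n m))\<^sup>2)"
  define B1 where "B1 = (\<lambda>(n,m). (norm (b n))\<^sup>2 * wt T n m)"
  define B2 where "B2 = (\<lambda>(n,m). (norm (b' n))\<^sup>2 * wt T n m)"
  define P where "P = (\<lambda>x. T * A1 x + B1 x + (T * A2 x + B2 x))"
  define Q where "Q = (\<lambda>x. l1 * l2 * P x)"
  define FG where "FG = (\<lambda>(n,m). f n m * g n m)"
  have sA1: "A1 summable_on idx" using a1 by (simp add: A1_def)
  have sA2: "A2 summable_on idx" using a1' by (simp add: A2_def)
  have sB1: "B1 summable_on idx" "infsum B1 idx \<le> 4 * T" using S2[OF T b1 b2] by (simp_all add: B1_def)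
  have sB2: "B2 summable_on idx" "infsum B2 idx \<le> 4 * T" using S2[OF T b1' b2'] by (simp_all add: B2_def)
  have iA1: "infsum A1 idx \<le> 1" using a2 by (simp add: A1_def)
  have iA2: "infsum A2 idx \<le> 1" using a2' by (simp add: A2_def)
  have sP: "P summable_on idx" unfolding P_def
    by (intro summable_on_add summable_on_cmult_right sA1 sA2 sB1 sB2)
  have s1: "(\<lambda>x. T * A1 x) summable_on idx" "(\<lambda>x. T * A2 x) summable_on idx"
    by (intro summable_on_cmult_right sA1 sA2)+
  have s2: "(\<lambda>x. T * A1 x + B1 x) summable_on idx" "(\<lambda>x. T * A2 x + B2 x) summable_on idx"
    by (intro summable_on_add s1 sB1 sB2)+
  have iP: "infsum P idx = T * infsum A1 idx + infsum B1 idx + (T * infsum A2 idx + infsum B2 idx)"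
    unfolding P_def infsum_add[OF s2] infsum_add[OF s1(1) sB1(1)] infsum_add[OF s1(2) sB2(1)]
      infsum_cmult_right[OF sA1] infsum_cmult_right[OF sA2] ..
  have iP2: "infsum P idx \<le> 10 * T"
  proof -
    have "T * infsum A1 idx \<le> T" using iA1 T mult_left_mono[of "infsum A1 idx" 1 T] by simp
    moreover have "T * infsum A2 idx \<le> T" using iA2 T mult_left_mono[of "infsum A2 idx" 1 T] by simp
    ultimately show ?thesis using iP sB1 sB2 by linarith
  qed
  have sQ: "Q summable_on idx" unfolding Q_def by (intro summable_on_cmult_right sP)
  have iQ: "infsum Q idx \<le> 10 * T * l1 * l2"
  proof -
    have "infsum Q idx = l1 * l2 * infsum P idx" unfolding Q_def by (rule infsum_cmult_right) (use sP in simp)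
    also have "\<dots> \<le> l1 * l2 * (10 * T)" using iP2 l by (intro mult_left_mono) auto
    finally show ?thesis by (simp add: algebra_simps)
  qed
  have pt: "norm (FG x) \<le> Q x" if x: "x \<in> idx" for x
  proof -
    obtain n m where xe: "x = (n,m)" by (cases x)
    have n1: "n \<ge> 1" using x by (simp add: xe idx_def)
    define Fv where "Fv = f n m / complex_of_real l1"
    define Gv where "Gv = g n m / complex_of_real l2"
    have hF: "(norm Fv)\<^sup>2 \<le> 2 * (T * (norm (a n m))\<^sup>2 + (norm (b n))\<^sup>2 * wt T n m)"
      by (rule ball_pw[OF T(1)]) (simp add: Fv_def fr[OF n1])
    have hG: "(norm Gv)\<^sup>2 \<le> 2 * (T * (norm (a' n m))\<^sup>2 + (norm (b' n))\<^sup>2 * wt T n m)"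
      by (rule ball_pw[OF T(1)]) (simp add: Gv_def gr[OF n1])
    have fe: "f n m = complex_of_real l1 * Fv" using l by (simp add: Fv_def)
    have ge: "g n m = complex_of_real l2 * Gv" using l by (simp add: Gv_def)
    have "norm (FG x) = l1 * l2 * (norm Fv * norm Gv)"
      using l by (simp add: FG_def xe fe ge norm_mult)
    also have "norm Fv * norm Gv \<le> ((norm Fv)\<^sup>2 + (norm Gv)\<^sup>2) / 2"
      by (rule amgm)
    also have "\<dots> \<le> P x" unfolding P_def A1_def A2_def B1_def B2_def xe prod.case by (rule lin2[OF hF hG])
    finally show ?thesis using l unfolding Q_def by (simp add: mult_left_mono)
  qed
  have aFG: "(\<lambda>x. norm (FG x)) summable_on idx"
    by (rule summable_on_comparison_test[OF sQ]) (use pt in auto)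
  have sFG: "FG summable_on idx" by (rule abs_summable_summable[OF aFG])
  have "norm (infsum FG idx) \<le> infsum Q idx"
    by (rule norm_infsum_le[OF has_sum_infsum[OF sFG] has_sum_infsum[OF sQ]]) (use pt in auto)
  then show ?thesis using iQ by (simp add: FG_def)
qed

lemma ball_bound:
  assumes T: "0 < T" "T \<le> 1" and h: "unit_ball_X T h" and n: "n \<ge> 1"
  shows "norm (h n m) \<le> 2"
proof -
  obtain a b where a1: "(\<lambda>(n,m). (norm (a n m))\<^sup>2) summable_on idx"
     and a2: "(\<Sum>\<^sub>\<infinity>(n,m)\<in>idx. (norm (a n m))\<^sup>2) \<le> 1"
     and b1: "(\<lambda>n. (norm (b n))\<^sup>2) summable_on {1..}"
     and b2: "(\<Sum>\<^sub>\<infinity>n\<in>{1..}. (norm (b n))\<^sup>2) \<le> 1"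
     and fr: "\<And>n m. n \<ge> 1 \<Longrightarrow> h n m =
            a n m / complex_of_real (sqrt (\<bar>real_of_int (int n ^ 2 - m)\<bar> + 1 / T))
          + (if \<bar>real_of_int (int n ^ 2 - m)\<bar> > 1 / T
             then b n / complex_of_real \<bar>real_of_int (int n ^ 2 - m)\<bar> else 0)"
    using h unfolding unit_ball_X_def by blast
  have "sum (\<lambda>(n,m). (norm (a n m))\<^sup>2) {(n,m)} \<le> (\<Sum>\<^sub>\<infinity>(n,m)\<in>idx. (norm (a n m))\<^sup>2)"
    by (rule finite_sum_le_infsum[OF a1]) (use n in \<open>auto simp: idx_def\<close>)
  then have "(norm (a n m))\<^sup>2 \<le> 1" using a2 by simp
  then have na: "norm (a n m) \<le> 1" by (simp add: power_le_one_iff abs_square_le_1)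
  have "sum (\<lambda>n. (norm (b n))\<^sup>2) {n} \<le> (\<Sum>\<^sub>\<infinity>n\<in>{1..}. (norm (b n))\<^sup>2)"
    by (rule finite_sum_le_infsum[OF b1]) (use n in auto)
  then have "(norm (b n))\<^sup>2 \<le> 1" using b2 by simp
  then have nb: "norm (b n) \<le> 1" by (simp add: abs_square_le_1)
  define d where "d = \<bar>real_of_int (int n ^ 2 - m)\<bar>"
  have d0: "d \<ge> 0" by (simp add: d_def)
  have T1: "1/T \<ge> 1" using T by simp
  have s1: "sqrt (d + 1/T) \<ge> 1" using d0 T1 by simp
  have t1: "norm (a n m / complex_of_real (sqrt (d + 1/T))) \<le> 1"
  proof -
    have "norm (a n m / complex_of_real (sqrt (d + 1/T))) = norm (a n m) / sqrt (d + 1/T)"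
      using s1 by (simp add: norm_divide)
    also have "\<dots> \<le> norm (a n m) / 1" by (rule divide_left_mono) (use s1 in auto)
    finally show ?thesis using na by simp
  qed
  have t2: "norm (if d > 1/T then b n / complex_of_real d else 0) \<le> 1"
  proof (cases "d > 1/T")
    case True
    then have "d \<ge> 1" using T1 by simp
    then have "norm (b n) / d \<le> 1" using nb by (simp add: divide_le_eq)
    then show ?thesis using True d0 by (simp add: norm_divide)
  qed simp
  have "norm (h n m) \<le> norm (a n m / complex_of_real (sqrt (d + 1/T))) + norm (if d > 1/T then b n / complex_of_real d else 0)"
    unfolding fr[OF n] d_def by (rule norm_triangle_ineq)
  then show ?thesis using t1 t2 by simp
qed

lemma normX_nonneg: "normX T h \<ge> 0"
  unfolding normX_def by (rule Inf_greatest) auto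

lemma normX_zero:
  assumes T: "0 < T" "T \<le> 1" and z: "normX T h = 0" and n: "n \<ge> 1"
  shows "h n m = 0"
proof (rule ccontr)
  assume ne: "h n m \<noteq> 0"
  define e where "e = norm (h n m) / 4"
  have e: "e > 0" using ne by (simp add: e_def)
  have "normX T h < ereal e" using z e by simp
  then obtain y where y: "y \<in> {ereal l | l. l > 0 \<and> unit_ball_X T (\<lambda>n m. h n m / complex_of_real l)}" "y < ereal e"
    unfolding normX_def by (auto simp: Inf_less_iff)
  then obtain l where l: "l > 0" "unit_ball_X T (\<lambda>n m. h n m / complex_of_real l)" "l < e" by auto
  have "norm (h n m / complex_of_real l) \<le> 2" using ball_bound[OF T l(2) n] by simp
  then have "norm (h n m) \<le> 2 * l" using l by (simp add: norm_divide divide_le_eq)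
  then show False using l e by (simp add: e_def)
qed

theorem lemma2p3:
  shows "\<exists>C :: real. C > 0 \<and>
    (\<forall>T :: real. \<forall>f g :: nat \<Rightarrow> int \<Rightarrow> complex. 0 < T \<and> T \<le> 1 \<longrightarrow>
       ereal (norm (\<Sum>\<^sub>\<infinity>(n,m)\<in>idx. f n m * g n m))
         \<le> ereal (C * T) * normX T f * normX T g)"
proof (intro exI[of _ 10] conjI allI impI)
  show "(10::real) > 0" by simp
  fix T :: real and f g :: "nat \<Rightarrow> int \<Rightarrow> complex"
  assume "0 < T \<and> T \<le> 1"
  then have T: "0 < T" "T \<le> 1" by auto
  define S where "S = norm (\<Sum>\<^sub>\<infinity>(n,m)\<in>idx. f n m * g n m)"
  have a0: "normX T f \<ge> 0" and b0: "normX T g \<ge> 0" by (rule normX_nonneg)+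
  have c0: "ereal (10 * T) > 0" using T by simp
  have rhs0: "ereal (10 * T) * normX T f * normX T g \<ge> 0"
    using a0 b0 c0 by simp
  show "ereal S \<le> ereal (10 * T) * normX T f * normX T g"
  proof (cases "(\<forall>n\<ge>1. \<forall>m. f n m = 0) \<or> (\<forall>n\<ge>1. \<forall>m. g n m = 0)")
    case True
    then have "S = 0" unfolding S_def by (subst infsum_0) (auto simp: idx_def)
    then show ?thesis using rhs0 by (simp add: zero_ereal_def)
  next
    case False
    then have "normX T f \<noteq> 0" "normX T g \<noteq> 0" using normX_zero[OF T] by blast+
    then have ap: "normX T f > 0" and bp: "normX T g > 0" using a0 b0 by auto
    show ?thesis
    proof (cases "normX T f = \<infinity> \<or> normX T g = \<infinity>")
      case True
      then show ?thesis
      proof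
        assume fi: "normX T f = \<infinity>"
        have "ereal (10 * T) * normX T f = \<infinity>" using T fi by simp
        then have "ereal (10 * T) * normX T f * normX T g = \<infinity>" using bp by (simp add: ereal_infty_mult)
        then show ?thesis by (metis ereal_less_eq(1))
      next
        assume gi: "normX T g = \<infinity>"
        have "ereal (10 * T) * normX T f > 0" using c0 ap by (simp add: ereal_zero_less_0_iff)
        then have "ereal (10 * T) * normX T f * normX T g = \<infinity>" using gi T ap by (simp add: ereal_mult_infty)
        then show ?thesis by (metis ereal_less_eq(1))
      qed
    next
      case False
      obtain a' where ae: "normX T f = ereal a'" using a0 False by (cases "normX T f") auto
      obtain b' where be: "normX T g = ereal b'" using b0 False by (cases "normX T g") auto
      have a'p: "a' > 0" and b'p: "b' > 0" using ap bp ae be by auto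
      have step1: "S \<le> 10 * T * a' * l2" if l2: "l2 > 0" "unit_ball_X T (\<lambda>n m. g n m / complex_of_real l2)" for l2
      proof -
        have "ereal (S / (10 * T * l2)) \<le> normX T f"
          unfolding normX_def
        proof (rule Inf_greatest)
          fix y assume "y \<in> {ereal l | l. l > 0 \<and> unit_ball_X T (\<lambda>n m. f n m / complex_of_real l)}"
          then obtain l1 where l1: "l1 > 0" "unit_ball_X T (\<lambda>n m. f n m / complex_of_real l1)" "y = ereal l1" by auto
          have "S \<le> 10 * T * l1 * l2" unfolding S_def by (rule core[OF T l1(1) l2(1) l1(2) l2(2)])
          then have "S / (10 * T * l2) \<le> l1" using T l2 by (simp add: divide_le_eq mult_ac)
          then show "ereal (S / (10 * T * l2)) \<le> y" using l1 by simp
        qed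
        then have "S / (10 * T * l2) \<le> a'" using ae by simp
        then show ?thesis using T l2 by (simp add: divide_le_eq mult_ac)
      qed
      have "ereal (S / (10 * T * a')) \<le> normX T g"
        unfolding normX_def
      proof (rule Inf_greatest)
        fix y assume "y \<in> {ereal l | l. l > 0 \<and> unit_ball_X T (\<lambda>n m. g n m / complex_of_real l)}"
        then obtain l2 where l2: "l2 > 0" "unit_ball_X T (\<lambda>n m. g n m / complex_of_real l2)" "y = ereal l2" by auto
        have "S \<le> 10 * T * a' * l2" by (rule step1[OF l2(1,2)])
        then have "S / (10 * T * a') \<le> l2" using T a'p by (simp add: divide_le_eq mult_ac)
        then show "ereal (S / (10 * T * a')) \<le> y" using l2 by simp
      qed
      then have "S / (10 * T * a') \<le> b'" using be by simp
      then have "S \<le> 10 * T * a' * b'" using T a'p by (simp add: divide_le_eq mult_ac)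
      then show ?thesis using ae be by simp
    qed
  qed
qed

end
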